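(* Let $(F,t)\in U$ with $t\neq0$, $Y=Y_{F,t}$, and $i\in\{1,2\}$. Then $D_i\setminus D_i^\circ=\Gamma_1\cup\Gamma_2$.
   Context: $U=U_0\times\mathbb{A}^1$, where $U_0$ is the space of cubic forms $F(x_0,\dots,x_3)$ such that the curve cut out by $F$ on the quadric $x_0x_3=x_1x_2$ in $\mathbb{P}^3$ is smooth, avoids $[0,0,0,1]$, and is tangent with multiplicity $2$ to the lines $x_0=x_1=0$ and $x_0=x_2=0$. $Y_{F,t}\subset\mathbb{P}^5$ is $x_4^3-F(x_0,\dots,x_3)+x_5(x_0x_3-x_1x_2)+t\,x_0x_5^2=0$, $F(Y)$ its Fano variety of lines, $p_0=[0,\dots,0,1]$. $C_i=(x_0=x_i=x_5=0)\cap(x_4^3=F)$, $\hat C_i\subset Y$ the cone over $C_i$ with vertex $p_0$, $\Gamma_i\subset F(Y)$ the set of lines $\overline{p_0p}$, $p\in C_i$. $D_i\subset F(Y)$ is the locus of lines meeting $\hat C_i$, and $D_i^\circ\subset D_i$ the subset of lines meeting $\hat C_i\setminus\{p_0\}$ in exactly one point. *)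

theory Defs
  imports Complex_Main "HOL-Computational_Algebra.Polynomial"
begin

text \<open>Vectors of C^4 and C^6 are functions nat => complex whose
coordinates with index > 3 (resp. > 5) vanish.  A projective point is a nonzero
vector up to scaling; a subvariety of projective space is represented by its affine
cone of vectors.\<close>

type_synonym vec = "nat \<Rightarrow> complex"
type_synonym cubic = "nat \<Rightarrow> nat \<Rightarrow> nat \<Rightarrow> complex"

definition vecn :: "nat \<Rightarrow> vec \<Rightarrow> bool" where
  "vecn n x \<longleftrightarrow> (\<forall>i>n. x i = 0)"

definition proportional :: "vec \<Rightarrow> vec \<Rightarrow> bool" where
  "proportional u v \<longleftrightarrow> (\<exists>a b. (a, b) \<noteq> (0, 0) \<and> (\<forall>m. a * u m + b * v m = 0))"

definition evalF :: "cubic \<Rightarrow> vec \<Rightarrow> complex" where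
  "evalF c x = (\<Sum>i<4. \<Sum>j<4. \<Sum>k<4. c i j k * x i * x j * x k)"

definition gradF :: "cubic \<Rightarrow> vec \<Rightarrow> vec" where
  "gradF c x = (\<lambda>m. if m < 4 then (\<Sum>i<4. \<Sum>j<4. \<Sum>k<4. c i j k *
      ((if i = m then x j * x k else 0) + (if j = m then x i * x k else 0)
       + (if k = m then x i * x j else 0))) else 0)"

definition quadQ :: "vec \<Rightarrow> complex" where
  "quadQ x = x 0 * x 3 - x 1 * x 2"

definition gradQ :: "vec \<Rightarrow> vec" where
  "gradQ x = (\<lambda>m. if m = 0 then x 3 else if m = 1 then - x 2 else if m = 2 then - x 1
                   else if m = 3 then x 0 else 0)"

definition smooth_curve :: "cubic \<Rightarrow> bool" where
  "smooth_curve c \<longleftrightarrow> (\<forall>x. vecn 3 x \<and> x \<noteq> (\<lambda>_. 0) \<and> quadQ x = 0 \<and> evalF c x = 0 \<longrightarrow>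
      \<not> proportional (gradF c x) (gradQ x))"

definition restr_poly :: "cubic \<Rightarrow> vec \<Rightarrow> vec \<Rightarrow> complex poly" where
  "restr_poly c p q = (\<Sum>i<4. \<Sum>j<4. \<Sum>k<4.
      smult (c i j k) ([:p i, q i:] * [:p j, q j:] * [:p k, q k:]))"

text \<open>Tangency with multiplicity 2 of the curve to the projective line through p, q,
where q is a point not on the curve (so all intersection points lie in the affine
chart p + u q): the restricted cubic has a root of multiplicity exactly 2.\<close>
definition tangent_mult2 :: "cubic \<Rightarrow> vec \<Rightarrow> vec \<Rightarrow> bool" where
  "tangent_mult2 c p q \<longleftrightarrow> restr_poly c p q \<noteq> 0 \<and> (\<exists>a. order a (restr_poly c p q) = 2)"

definition e :: "nat \<Rightarrow> vec" where
  "e n = (\<lambda>m. if m = n then 1 else 0)"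

definition U0 :: "cubic set" where
  "U0 = {c. smooth_curve c \<and> evalF c (e 3) \<noteq> 0
          \<and> tangent_mult2 c (e 2) (e 3)   \<comment> \<open>line x0 = x1 = 0\<close>
          \<and> tangent_mult2 c (e 1) (e 3)}" \<comment> \<open>line x0 = x2 = 0\<close>

definition Yeq :: "cubic \<Rightarrow> complex \<Rightarrow> vec \<Rightarrow> complex" where
  "Yeq c t x = x 4 ^ 3 - evalF c x + x 5 * (x 0 * x 3 - x 1 * x 2) + t * x 0 * x 5 ^ 2"

definition span2 :: "vec \<Rightarrow> vec \<Rightarrow> vec set" where
  "span2 u v = {x. \<exists>a b. x = (\<lambda>m. a * u m + b * v m)}"

text \<open>Lines of P^5, represented as 2-dimensional subspaces of C^6.\<close>
definition lines5 :: "vec set set" where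
  "lines5 = {L. \<exists>u v. vecn 5 u \<and> vecn 5 v \<and> \<not> proportional u v \<and> L = span2 u v}"

definition Fano :: "cubic \<Rightarrow> complex \<Rightarrow> vec set set" where
  "Fano c t = {L \<in> lines5. \<forall>x\<in>L. Yeq c t x = 0}"

definition p0 :: vec where "p0 = e 5"

definition Ccone :: "cubic \<Rightarrow> nat \<Rightarrow> vec set" where
  "Ccone c i = {x. vecn 5 x \<and> x 0 = 0 \<and> x i = 0 \<and> x 5 = 0 \<and> x 4 ^ 3 = evalF c x}"

definition Chat :: "cubic \<Rightarrow> nat \<Rightarrow> vec set" where
  "Chat c i = \<Union>{span2 p p0 | p. p \<in> Ccone c i}"

definition Gamma :: "cubic \<Rightarrow> nat \<Rightarrow> vec set set" where
  "Gamma c i = {span2 p0 p | p. p \<in> Ccone c i \<and> p \<noteq> (\<lambda>_. 0)}"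

definition Dloc :: "cubic \<Rightarrow> complex \<Rightarrow> nat \<Rightarrow> vec set set" where
  "Dloc c t i = {L \<in> Fano c t. \<exists>x\<in>L \<inter> Chat c i. x \<noteq> (\<lambda>_. 0)}"

definition Dcirc :: "cubic \<Rightarrow> complex \<Rightarrow> nat \<Rightarrow> vec set set" where
  "Dcirc c t i = {L \<in> Dloc c t i.
     (\<exists>x\<in>L \<inter> Chat c i. x \<noteq> (\<lambda>_. 0) \<and> \<not> proportional x p0) \<and>
     (\<forall>x\<in>L \<inter> Chat c i. \<forall>y\<in>L \<inter> Chat c i.
        x \<noteq> (\<lambda>_. 0) \<and> \<not> proportional x p0 \<and> y \<noteq> (\<lambda>_. 0) \<and> \<not> proportional y p0 \<longrightarrow> proportional x y)}"

end

theory Submission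
  imports Defs
begin

lemma evalF_cong: "(\<And>m. m < 4 \<Longrightarrow> x m = y m) \<Longrightarrow> evalF c x = evalF c y"
  unfolding evalF_def by (intro sum.cong refl) auto

lemma evalF_smult: "evalF c (\<lambda>m. b * x m) = b^3 * evalF c x"
  unfolding evalF_def by (simp add: sum_distrib_left power3_eq_cube mult_ac)

lemma poly_restr: "poly (restr_poly c p q) s = evalF c (\<lambda>m. p m + s * q m)"
  unfolding restr_poly_def evalF_def by (simp add: poly_sum algebra_simps)

lemma order_cube_ne2:
  fixes l0 l1 :: complex
  assumes "[:l0, l1:] ^ 3 \<noteq> 0"
  shows "order a ([:l0, l1:] ^ 3) \<noteq> 2"
proof -
  let ?l = "[:l0, l1:]"
  have nz: "?l \<noteq> 0" using assms by auto
  have g: "order a (p ^ 3) = 3 * order a p" if "(p::complex poly) \<noteq> 0" for p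
  proof -
    have "order a (p ^ 3) = order a (p * (p * p))" by (simp add: power3_eq_cube mult.assoc)
    also have "\<dots> = order a p + (order a p + order a p)" using that by (simp add: order_mult)
    finally show ?thesis by simp
  qed
  have "order a (?l ^ 3) = 3 * order a ?l" using g[OF nz] .
  moreover have "order a ?l \<le> 1" using order_degree[OF nz, of a] by (simp split: if_splits)
  ultimately show ?thesis by presburger
qed

lemma span2_lin: "x \<in> span2 u v \<Longrightarrow> y \<in> span2 u v \<Longrightarrow> (\<lambda>m. a * x m + b * y m) \<in> span2 u v"
proof -
  assume "x \<in> span2 u v" "y \<in> span2 u v"
  then obtain a1 b1 a2 b2 where "x = (\<lambda>m. a1 * u m + b1 * v m)" "y = (\<lambda>m. a2 * u m + b2 * v m)"
    unfolding span2_def by blast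
  then have "(\<lambda>m. a * x m + b * y m) = (\<lambda>m. (a*a1 + b*a2) * u m + (a*b1+b*b2) * v m)"
    by (auto simp: algebra_simps)
  then show ?thesis unfolding span2_def by blast
qed

lemma span2_gen: "u \<in> span2 u v" "v \<in> span2 u v"
  unfolding span2_def
  by (rule CollectI, rule exI[of _ 1], rule exI[of _ 0], simp)
     (rule CollectI, rule exI[of _ 0], rule exI[of _ 1], simp)

lemma span2_sym: "span2 u v = span2 v u"
  unfolding span2_def
  apply auto
  apply (rule_tac x=b in exI, rule_tac x=a in exI, simp add: add.commute)+
  done

lemma span2_eq:
  assumes z: "z \<in> span2 u v" and w: "w \<in> span2 u v" and np: "\<not> proportional z w"
  shows "span2 z w = span2 u v"
proof
  show "span2 z w \<subseteq> span2 u v"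
    using span2_lin[OF z w] unfolding span2_def[of z w] by auto
next
  obtain a b cc d where zz: "z = (\<lambda>m. a * u m + b * v m)" and ww: "w = (\<lambda>m. cc * u m + d * v m)"
    using z w unfolding span2_def by blast
  have det: "a * d - b * cc \<noteq> 0"
  proof
    assume h: "a * d - b * cc = 0"
    have e1: "\<forall>m. d * z m + (- b) * w m = 0"
      using h by (auto simp: zz ww algebra_simps)
    have e2: "\<forall>m. (- cc) * z m + a * w m = 0"
      using h by (auto simp: zz ww algebra_simps)
    show False
    proof (cases "(d, -b) \<noteq> (0,0)")
      case True then show False using np e1 unfolding proportional_def by blast
    next
      case f1: False
      show False
      proof (cases "(-cc, a) \<noteq> (0,0)")
        case True then show False using np e2 unfolding proportional_def by blast
      next
        case False
        then have "z = (\<lambda>_. 0)" using f1 zz by auto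
        then show False using np unfolding proportional_def
          by (metis mult_zero_right add_0 mult_zero_left one_neq_zero prod.inject)
      qed
    qed
  qed
  define D where "D = a * d - b * cc"
  have uu: "u = (\<lambda>m. (d / D) * z m + (- b / D) * w m)"
  proof
    fix m
    have "d * z m + (- b) * w m = D * u m" by (simp add: D_def zz ww algebra_simps)
    then have "u m = (d * z m + (- b) * w m) / D" using det by (simp add: D_def)
    then show "u m = (d / D) * z m + (- b / D) * w m" by (simp add: add_divide_distrib diff_divide_distrib)
  qed
  have vv: "v = (\<lambda>m. (- cc / D) * z m + (a / D) * w m)"
  proof
    fix m
    have "(- cc) * z m + a * w m = D * v m" by (simp add: D_def zz ww algebra_simps)
    then have "v m = ((- cc) * z m + a * w m) / D" using det by (simp add: D_def)
    then show "v m = (- cc / D) * z m + (a / D) * w m" by (simp add: add_divide_distrib diff_divide_distrib)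
  qed
  show "span2 u v \<subseteq> span2 z w"
  proof
    fix x assume "x \<in> span2 u v"
    moreover have "u \<in> span2 z w" "v \<in> span2 z w"
      by (subst uu, rule span2_lin, rule span2_gen, rule span2_gen)
         (subst vv, rule span2_lin, rule span2_gen, rule span2_gen)
    ultimately show "x \<in> span2 z w"
      unfolding span2_def[of u v] using span2_lin by blast
  qed
qed

lemma prop_p0: "proportional x p0 \<longleftrightarrow> (\<forall>m. m \<noteq> 5 \<longrightarrow> x m = 0)"
proof
  assume "proportional x p0"
  then obtain a b where ab: "(a, b) \<noteq> (0, 0)" "\<forall>m. a * x m + b * p0 m = 0"
    unfolding proportional_def by blast
  have "a \<noteq> 0"
  proof
    assume "a = 0" then have "b = 0" using ab(2)[rule_format, of 5] by (simp add: p0_def e_def)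
    with \<open>a = 0\<close> ab(1) show False by simp
  qed
  show "\<forall>m. m \<noteq> 5 \<longrightarrow> x m = 0"
  proof (intro allI impI)
    fix m :: nat assume "m \<noteq> 5"
    then have "a * x m = 0" using ab(2)[rule_format, of m] by (simp add: p0_def e_def)
    then show "x m = 0" using \<open>a \<noteq> 0\<close> by simp
  qed
next
  assume h: "\<forall>m. m \<noteq> 5 \<longrightarrow> x m = 0"
  have "\<forall>m. 1 * x m + (- x 5) * p0 m = 0" using h by (auto simp: p0_def e_def)
  then show "proportional x p0" unfolding proportional_def
    by (metis one_neq_zero prod.inject)
qed

lemma prop_sym: "proportional u v \<Longrightarrow> proportional v u"
proof -
  assume "proportional u v"
  then obtain a b where "(a, b) \<noteq> (0, 0)" "\<forall>m. a * u m + b * v m = 0"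
    unfolding proportional_def by blast
  then have "(b, a) \<noteq> (0, 0) \<and> (\<forall>m. b * v m + a * u m = 0)" by (auto simp: add.commute)
  then show "proportional v u" unfolding proportional_def by blast
qed

lemma vecn_span: "x \<in> span2 u v \<Longrightarrow> vecn 5 u \<Longrightarrow> vecn 5 v \<Longrightarrow> vecn 5 x"
  unfolding span2_def vecn_def by auto

lemma both_p0_prop:
  assumes "\<forall>m. m \<noteq> 5 \<longrightarrow> u m = 0" "\<forall>m. m \<noteq> 5 \<longrightarrow> v m = 0"
  shows "proportional u v"
proof (cases "u 5 = 0")
  case True
  have "\<forall>m. 1 * u m + 0 * v m = 0"
  proof
    fix m :: nat show "1 * u m + 0 * v m = 0" using assms True by (cases "m = 5") auto
  qed
  then have "(1::complex, 0::complex) \<noteq> (0, 0) \<and> (\<forall>m. 1 * u m + 0 * v m = 0)" by simp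
  then show ?thesis unfolding proportional_def by blast
next
  case False
  have "\<forall>m. v 5 * u m + (- u 5) * v m = 0"
  proof
    fix m :: nat show "v 5 * u m + (- u 5) * v m = 0" using assms by (cases "m = 5") auto
  qed
  then have "(v 5, - u 5) \<noteq> (0, 0) \<and> (\<forall>m. v 5 * u m + (- u 5) * v m = 0)" using False by simp
  then show ?thesis unfolding proportional_def by blast
qed

lemma fanoE:
  assumes "L \<in> Fano c t"
  obtains u v where "vecn 5 u" "vecn 5 v" "\<not> proportional u v" "L = span2 u v"
    "\<forall>x\<in>L. Yeq c t x = 0"
  using assms unfolding Fano_def lines5_def by blast

lemma through_p0:
  assumes L: "L \<in> Fano c t" and t: "t \<noteq> 0" and p: "p0 \<in> L"
  shows "L \<in> Gamma c 1 \<union> Gamma c 2"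
proof -
  obtain u v where uv: "vecn 5 u" "vecn 5 v" "\<not> proportional u v" "L = span2 u v"
    and Y: "\<forall>x\<in>L. Yeq c t x = 0" using fanoE[OF L] by blast
  obtain w where w: "w \<in> L" "\<not> proportional w p0"
  proof (cases "proportional u p0")
    case False then show ?thesis using that uv(4) span2_gen by blast
  next
    case True
    show ?thesis
    proof (cases "proportional v p0")
      case False then show ?thesis using that uv(4) span2_gen by blast
    next
      case True
      have "\<forall>m. m \<noteq> 5 \<longrightarrow> u m = 0" using \<open>proportional u p0\<close> prop_p0 by blast
      moreover have "\<forall>m. m \<noteq> 5 \<longrightarrow> v m = 0" using True prop_p0 by blast
      ultimately have "proportional u v" by (rule both_p0_prop)
      then show ?thesis using uv(3) by blast
    qed
  qed
  define q where "q = (\<lambda>m. 1 * w m + (- w 5) * p0 m)"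
  have qL: "q \<in> L" unfolding q_def using span2_lin[of w u v p0 1 "- w 5"] w(1) p uv(4) by blast
  have q5: "q 5 = 0" by (simp add: q_def p0_def e_def)
  have qw: "\<And>m. m \<noteq> 5 \<Longrightarrow> q m = w m" by (simp add: q_def p0_def e_def)
  have nq: "\<not> proportional q p0" using w(2) qw by (simp add: prop_p0)
  have "\<not> proportional p0 q" using nq prop_sym by blast
  then have Lq: "L = span2 p0 q"
    using span2_eq[of p0 u v q] p qL unfolding uv(4) by simp
  have vq: "vecn 5 q" using vecn_span qL uv by blast
  have Ys: "q 4 ^ 3 - evalF c q + s * (q 0 * q 3 - q 1 * q 2) + t * q 0 * s ^ 2 = 0" for s
  proof -
    have "(\<lambda>m. s * p0 m + 1 * q m) \<in> L" using span2_lin[of p0 u v q s 1] p qL uv(4) by blast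
    then have "Yeq c t (\<lambda>m. s * p0 m + 1 * q m) = 0" using Y by blast
    moreover have "evalF c (\<lambda>m. s * p0 m + 1 * q m) = evalF c q"
      by (rule evalF_cong) (simp add: p0_def e_def)
    ultimately show ?thesis by (simp add: Yeq_def p0_def e_def q5)
  qed
  have A: "q 4 ^ 3 - evalF c q = 0" using Ys[of 0] by simp
  have B: "(q 0 * q 3 - q 1 * q 2) + t * q 0 = 0" using Ys[of 1] A by simp
  have C: "- (q 0 * q 3 - q 1 * q 2) + t * q 0 = 0" using Ys[of "-1"] A by simp
  have "((q 0 * q 3 - q 1 * q 2) + t * q 0) + (- (q 0 * q 3 - q 1 * q 2) + t * q 0) = 0"
    using B C by simp
  then have "2 * (t * q 0) = 0" by (simp add: algebra_simps)
  then have q0: "q 0 = 0" using t by simp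
  have q12: "q 1 * q 2 = 0" using B q0 by simp
  have qnz: "q \<noteq> (\<lambda>_. 0)"
  proof
    assume "q = (\<lambda>_. 0)" then have "proportional q p0" unfolding prop_p0 by simp
    then show False using nq by blast
  qed
  have "q \<in> Ccone c 1 \<or> q \<in> Ccone c 2"
    using q12 q0 q5 vq A unfolding Ccone_def by auto
  then show ?thesis using Lq qnz unfolding Gamma_def by blast
qed

lemma no_two:
  fixes i j :: nat
  assumes U: "c \<in> U0" and ij: "(i = 1 \<and> j = 2) \<or> (i = 2 \<and> j = 1)"
    and L: "L \<in> Fano c t" and np: "p0 \<notin> L"
    and x: "x \<in> L" "x 0 = 0" "x i = 0" and y: "y \<in> L" "y 0 = 0" "y i = 0"
    and nxy: "\<not> proportional x y"
  shows False
proof -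
  obtain u v where uv: "vecn 5 u" "vecn 5 v" "\<not> proportional u v" "L = span2 u v"
    and Y: "\<forall>x\<in>L. Yeq c t x = 0" using fanoE[OF L] by blast
  have tang: "tangent_mult2 c (e j) (e 3)" using U ij unfolding U0_def by auto
  have comb: "(\<lambda>m. a * x m + b * y m) \<in> L" for a b
    using span2_lin[of x u v y a b] x(1) y(1) unfolding uv(4) by blast
  have Yz: "evalF c (\<lambda>m. a * x m + b * y m) = (a * x 4 + b * y 4) ^ 3" for a b
  proof -
    have "Yeq c t (\<lambda>m. a * x m + b * y m) = 0" using Y comb by blast
    moreover have "(a * x 1 + b * y 1) * (a * x 2 + b * y 2) = 0" using ij x y by auto
    ultimately show ?thesis by (auto simp: Yeq_def x y)
  qed
  define D where "D = x j * y 3 - x 3 * y j"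
  show False
  proof (cases "D = 0")
    case True
    obtain a b where ab: "(a, b) \<noteq> (0, 0)" "a * x j + b * y j = 0" "a * x 3 + b * y 3 = 0"
    proof (cases "(y 3, - x 3) \<noteq> (0, 0)")
      case True
      then show ?thesis using that[of "y 3" "- x 3"] \<open>D = 0\<close> by (simp add: D_def algebra_simps)
    next
      case f1: False
      show ?thesis
      proof (cases "(y j, - x j) \<noteq> (0, 0)")
        case True
        then show ?thesis using that[of "y j" "- x j"] \<open>D = 0\<close> by (simp add: D_def algebra_simps)
      next
        case False
        then show ?thesis using that[of 1 0] f1 by simp
      qed
    qed
    define z where "z = (\<lambda>m. a * x m + b * y m)"
    have zL: "z \<in> L" unfolding z_def by (rule comb)
    have z03: "z m = 0" if "m < 4" for m
    proof -
      have "m = 0 \<or> m = 1 \<or> m = 2 \<or> m = 3" using that by auto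
      then show ?thesis using ij x y ab unfolding z_def by auto
    qed
    have "evalF c z = evalF c (\<lambda>_. 0)" by (rule evalF_cong) (simp add: z03)
    also have "\<dots> = 0" by (simp add: evalF_def)
    finally have "z 4 ^ 3 = 0" using Yz[of a b] unfolding z_def by simp
    then have z4: "z 4 = 0" by simp
    have vz: "vecn 5 z" using vecn_span zL uv unfolding uv(4) by blast
    have zoff: "z m = 0" if "m \<noteq> 5" for m
    proof -
      have "m < 4 \<or> m = 4 \<or> m > 5" using that by auto
      then show ?thesis using z03 z4 vz unfolding vecn_def by auto
    qed
    have "z 5 \<noteq> 0"
    proof
      assume "z 5 = 0"
      then have "\<forall>m. a * x m + b * y m = 0" using zoff unfolding z_def by metis
      then show False using nxy ab(1) unfolding proportional_def by blast
    qed
    have "p0 = (\<lambda>m. (1 / z 5) * z m + 0 * z m)"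
    proof
      fix m :: nat show "p0 m = (1 / z 5) * z m + 0 * z m"
        using \<open>z 5 \<noteq> 0\<close> zoff[of m] by (cases "m = 5") (auto simp: p0_def e_def)
    qed
    moreover have "(\<lambda>m. (1 / z 5) * z m + 0 * z m) \<in> L"
      using span2_lin[of z u v z "1 / z 5" 0] zL unfolding uv(4) by blast
    ultimately show False using np by simp
  next
    case False
    define l0 where "l0 = (y 3 * x 4 - x 3 * y 4) / D"
    define l1 where "l1 = (x j * y 4 - y j * x 4) / D"
    have "poly (restr_poly c (e j) (e 3)) s = poly ([:l0, l1:] ^ 3) s" for s
    proof -
      define a where "a = (y 3 - s * y j) / D"
      define b where "b = (s * x j - x 3) / D"
      have c1: "a * x j + b * y j = 1"
        using False by (simp add: a_def b_def field_simps) (simp add: D_def algebra_simps)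
      have c3: "a * x 3 + b * y 3 = s"
        using False by (simp add: a_def b_def field_simps) (simp add: D_def algebra_simps)
      have c4: "a * x 4 + b * y 4 = l0 + s * l1"
        using False by (simp add: a_def b_def l0_def l1_def field_simps)
      have "poly (restr_poly c (e j) (e 3)) s = evalF c (\<lambda>m. e j m + s * e 3 m)" by (rule poly_restr)
      also have "\<dots> = evalF c (\<lambda>m. a * x m + b * y m)"
      proof (rule evalF_cong)
        fix m :: nat assume "m < 4"
        then have "m = 0 \<or> m = 1 \<or> m = 2 \<or> m = 3" by auto
        then show "e j m + s * e 3 m = a * x m + b * y m"
          using ij x y c1 c3 by (auto simp: e_def)
      qed
      also have "\<dots> = (l0 + s * l1) ^ 3" using Yz c4 by simp
      finally show ?thesis by (simp add: algebra_simps)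
    qed
    then have "restr_poly c (e j) (e 3) = [:l0, l1:] ^ 3"
      using poly_eq_poly_eq_iff by blast
    then show False using tang order_cube_ne2 unfolding tangent_mult2_def by metis
  qed
qed

lemma chat_mem:
  assumes "x \<in> Chat c i" "i \<in> {1, 2}"
  shows "x 0 = 0" "x i = 0"
proof -
  obtain q where q: "q \<in> Ccone c i" "x \<in> span2 q p0" using assms(1) unfolding Chat_def by blast
  then obtain a b where "x = (\<lambda>m. a * q m + b * p0 m)" unfolding span2_def by blast
  then show "x 0 = 0" "x i = 0" using q(1) assms(2) by (auto simp: Ccone_def p0_def e_def)
qed

lemma span_chat: "p \<in> Ccone c i \<Longrightarrow> span2 p0 p \<subseteq> Chat c i"
  unfolding Chat_def using span2_sym by blast

lemma zero_ccone: "(\<lambda>_. 0) \<in> Ccone c i"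
  unfolding Ccone_def vecn_def by (simp add: evalF_def)

lemma p0_chat: "p0 \<in> Chat c i"
  using span_chat[OF zero_ccone] span2_gen by blast

lemma p0_nz: "p0 \<noteq> (\<lambda>_. 0)"
proof
  assume "p0 = (\<lambda>_. 0)" then have "p0 5 = 0" by (rule fun_cong)
  then show False by (simp add: p0_def e_def)
qed

theorem lemma5p8:
  fixes c :: cubic and t :: complex and i :: nat
  assumes "c \<in> U0" and "t \<noteq> 0" and "i \<in> {1, 2}"
  shows "Dloc c t i - Dcirc c t i = Gamma c 1 \<union> Gamma c 2"
proof
  show "Dloc c t i - Dcirc c t i \<subseteq> Gamma c 1 \<union> Gamma c 2"
  proof
    fix L assume LD: "L \<in> Dloc c t i - Dcirc c t i"
    then have LF: "L \<in> Fano c t" and ex: "\<exists>x\<in>L \<inter> Chat c i. x \<noteq> (\<lambda>_. 0)"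
      unfolding Dloc_def by auto
    show "L \<in> Gamma c 1 \<union> Gamma c 2"
    proof (cases "p0 \<in> L")
      case True then show ?thesis using through_p0[OF LF assms(2)] by blast
    next
      case False
      obtain u v where uv: "vecn 5 u" "vecn 5 v" "\<not> proportional u v" "L = span2 u v"
        using fanoE[OF LF] by blast
      obtain x where x: "x \<in> L" "x \<in> Chat c i" "x \<noteq> (\<lambda>_. 0)" using ex by blast
      have npx: "\<not> proportional x p0"
      proof
        assume "proportional x p0"
        then have xo: "\<And>m. m \<noteq> 5 \<Longrightarrow> x m = 0" using prop_p0 by blast
        have "x 5 \<noteq> 0"
        proof
          assume "x 5 = 0"
          then have "x = (\<lambda>_. 0)" using xo by (metis)
          then show False using x(3) by simp
        qed
        have "p0 = (\<lambda>m. (1 / x 5) * x m + 0 * x m)"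
        proof
          fix m :: nat show "p0 m = (1 / x 5) * x m + 0 * x m"
            using \<open>x 5 \<noteq> 0\<close> xo[of m] by (cases "m = 5") (auto simp: p0_def e_def)
        qed
        moreover have "(\<lambda>m. (1 / x 5) * x m + 0 * x m) \<in> L"
          using span2_lin[of x u v x "1 / x 5" 0] x(1) unfolding uv(4) by blast
        ultimately show False using False by simp
      qed
      obtain j :: nat where ij: "(i = 1 \<and> j = 2) \<or> (i = 2 \<and> j = 1)"
        using assms(3) by auto
      have uniq: "\<forall>x\<in>L \<inter> Chat c i. \<forall>y\<in>L \<inter> Chat c i.
        x \<noteq> (\<lambda>_. 0) \<and> \<not> proportional x p0 \<and> y \<noteq> (\<lambda>_. 0) \<and> \<not> proportional y p0 \<longrightarrow> proportional x y"
      proof (intro ballI impI)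
        fix x y assume xx: "x \<in> L \<inter> Chat c i" and yy: "y \<in> L \<inter> Chat c i"
        show "proportional x y"
        proof (rule ccontr)
          assume "\<not> proportional x y"
          then show False
            using no_two[OF assms(1) ij LF False, of x y] xx yy chat_mem[OF _ assms(3)] by blast
        qed
      qed
      have "L \<in> Dcirc c t i"
        unfolding Dcirc_def using LD x npx uniq by blast
      then show ?thesis using LD by blast
    qed
  qed
next
  show "Gamma c 1 \<union> Gamma c 2 \<subseteq> Dloc c t i - Dcirc c t i"
  proof
    fix L assume "L \<in> Gamma c 1 \<union> Gamma c 2"
    then obtain j p where j: "j \<in> {1, 2}" and p: "p \<in> Ccone c j" "p \<noteq> (\<lambda>_. 0)"
      and Lp: "L = span2 p0 p"
      unfolding Gamma_def by blast
    have pp: "vecn 5 p" "p 0 = 0" "p j = 0" "p 5 = 0" "p 4 ^ 3 = evalF c p"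
      using p(1) unfolding Ccone_def by auto
    have npp: "\<not> proportional p p0"
    proof
      assume "proportional p p0"
      then have "\<And>m. m \<noteq> 5 \<Longrightarrow> p m = 0" using prop_p0 by blast
      then have "p = (\<lambda>_. 0)" using pp(4) by metis
      then show False using p(2) by simp
    qed
    have vp0: "vecn 5 p0" by (simp add: vecn_def p0_def e_def)
    have YL: "\<forall>x\<in>L. Yeq c t x = 0"
    proof
      fix x assume "x \<in> L"
      then obtain a b where xab: "x = (\<lambda>m. a * p0 m + b * p m)" unfolding Lp span2_def by blast
      have "evalF c x = evalF c (\<lambda>m. b * p m)"
        by (rule evalF_cong) (simp add: xab p0_def e_def)
      also have "\<dots> = b ^ 3 * evalF c p" by (rule evalF_smult)
      finally have ev: "evalF c x = b ^ 3 * p 4 ^ 3" using pp(5) by simp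
      have x12: "x 1 * x 2 = 0" using j pp(3) by (auto simp: xab p0_def e_def)
      have "x 0 = 0" "x 4 = b * p 4" using pp by (auto simp: xab p0_def e_def)
      then show "Yeq c t x = 0" using ev x12 by (simp add: Yeq_def power_mult_distrib)
    qed
    have LF: "L \<in> Fano c t"
      unfolding Fano_def lines5_def using vp0 pp(1) npp prop_sym Lp YL by blast
    have p0L: "p0 \<in> L" unfolding Lp by (rule span2_gen)
    have LDl: "L \<in> Dloc c t i" unfolding Dloc_def using LF p0L p0_chat p0_nz by blast
    have "L \<notin> Dcirc c t i"
    proof (cases "p i = 0")
      case True
      then have pC: "p \<in> Ccone c i" using p(1) unfolding Ccone_def by auto
      define y where "y = (\<lambda>m. 1 * p0 m + 1 * p m)"
      have yL: "y \<in> L" unfolding y_def Lp using span2_lin span2_gen by blast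
      have pL: "p \<in> L" unfolding Lp by (rule span2_gen)
      have yC: "y \<in> Chat c i" "p \<in> Chat c i" using yL pL span_chat[OF pC] Lp by auto
      have yo: "\<And>m. m \<noteq> 5 \<Longrightarrow> y m = p m" by (simp add: y_def p0_def e_def)
      have npy: "\<not> proportional y p0"
      proof
        assume "proportional y p0"
        then have "proportional p p0" using yo prop_p0 by simp
        then show False using npp by blast
      qed
      have y5: "y 5 = 1" by (simp add: y_def p0_def e_def pp(4))
      have ynz: "y \<noteq> (\<lambda>_. 0)" using y5 by auto
      have nppy: "\<not> proportional p y"
      proof
        assume "proportional p y"
        then obtain a b where ab: "(a, b) \<noteq> (0, 0)" "\<forall>m. a * p m + b * y m = 0"
          unfolding proportional_def by blast
        have "b = 0" using ab(2)[rule_format, of 5] y5 pp(4) by simp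
        then have "\<forall>m. a * p m = 0" using ab(2) by simp
        moreover obtain m where "p m \<noteq> 0" using p(2) by auto
        ultimately have "a = 0" by auto
        then show False using ab(1) \<open>b = 0\<close> by simp
      qed
      show ?thesis
      proof
        assume "L \<in> Dcirc c t i"
        then have "proportional p y"
          unfolding Dcirc_def using pL yL yC p(2) ynz npp npy by blast
        then show False using nppy by blast
      qed
    next
      case False
      show ?thesis
      proof
        assume "L \<in> Dcirc c t i"
        then obtain x where x: "x \<in> L" "x \<in> Chat c i" "\<not> proportional x p0"
          unfolding Dcirc_def by blast
        obtain a b where xab: "x = (\<lambda>m. a * p0 m + b * p m)" using x(1) unfolding Lp span2_def by blast
        have "x i = 0" using chat_mem[OF x(2) assms(3)] by simp
        then have "b * p i = 0" using assms(3) by (auto simp: xab p0_def e_def)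
        then have "b = 0" using False by simp
        then have "proportional x p0" unfolding prop_p0 by (simp add: xab p0_def e_def)
        then show False using x(3) by blast
      qed
    qed
    then show "L \<in> Dloc c t i - Dcirc c t i" using LDl by blast
  qed
qed

end
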